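(* Let $q$ be a prime power and $1\le k\le n-1$. A non-empty set of affine $k$-spaces of $\mathrm{AG}(n,q)$ all contained in a fixed hyperplane of $\mathrm{AG}(n,q)$ is not a Cameron-Liebler $k$-set of $\mathrm{AG}(n,q)$.
   Context: $\mathrm{AG}(n,q)$ is $\mathrm{PG}(n,q)$ with a hyperplane $\pi_\infty$ removed; affine points are points outside $\pi_\infty$, affine $k$-spaces (resp. hyperplanes) are $k$-dimensional (resp. $(n-1)$-dimensional) projective subspaces not contained in $\pi_\infty$. With $A_n$ the incidence matrix of affine points versus affine $k$-spaces, a set of affine $k$-spaces is a Cameron-Liebler $k$-set of $\mathrm{AG}(n,q)$ if its characteristic vector lies in the real row space $\mathrm{Im}(A_n^T)$. *)

theory Defs
  imports Complex_Main "HOL-Library.Cardinality"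
begin

text \<open>Points of AG(n,q): functions 'n => 'a, with 'a a finite field (of order q)
  and 'n a finite index type with CARD('n) = n.\<close>

definition lin_indep :: "nat \<Rightarrow> (nat \<Rightarrow> 'n \<Rightarrow> 'a::field) \<Rightarrow> bool" where
  "lin_indep k v \<longleftrightarrow>
     (\<forall>c. (\<forall>j. (\<Sum>i<k. c i * v i j) = 0) \<longrightarrow> (\<forall>i<k. c i = 0))"

definition affine_span :: "('n \<Rightarrow> 'a::field) \<Rightarrow> nat \<Rightarrow> (nat \<Rightarrow> 'n \<Rightarrow> 'a) \<Rightarrow> ('n \<Rightarrow> 'a) set" where
  "affine_span p k v = {x. \<exists>c. \<forall>j. x j = p j + (\<Sum>i<k. c i * v i j)}"

definition affine_subspace :: "nat \<Rightarrow> ('n::finite \<Rightarrow> 'a::{field,finite}) set \<Rightarrow> bool" where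
  "affine_subspace k S \<longleftrightarrow> (\<exists>p v. lin_indep k v \<and> S = affine_span p k v)"

definition affine_hyperplane :: "('n::finite \<Rightarrow> 'a::{field,finite}) set \<Rightarrow> bool" where
  "affine_hyperplane H \<longleftrightarrow> affine_subspace (CARD('n) - 1) (H :: ('n \<Rightarrow> 'a) set)"

text \<open>Incidence matrix A_n: affine points versus affine k-spaces.\<close>
definition incidence :: "('n \<Rightarrow> 'a) \<Rightarrow> ('n \<Rightarrow> 'a) set \<Rightarrow> real" where
  "incidence p K = (if p \<in> K then 1 else 0)"

text \<open>Real row space Im(A_n^T), as functions on the affine k-spaces.\<close>
definition row_space :: "nat \<Rightarrow> ((('n::finite \<Rightarrow> 'a::{field,finite}) set) \<Rightarrow> real) set" where
  "row_space k = {f. \<exists>y :: ('n \<Rightarrow> 'a) \<Rightarrow> real.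
      \<forall>K. affine_subspace k K \<longrightarrow> f K = (\<Sum>p\<in>UNIV. incidence p K * y p)}"

definition cameron_liebler :: "nat \<Rightarrow> ('n::finite \<Rightarrow> 'a::{field,finite}) set set \<Rightarrow> bool" where
  "cameron_liebler k L \<longleftrightarrow>
     (\<forall>K\<in>L. affine_subspace k K) \<and>
     (\<lambda>K. if K \<in> L then 1 else 0) \<in> row_space k"

end

theory Submission
  imports Defs "HOL-Library.FuncSet"
begin

lemma aspan_mem: "x \<in> affine_span p k v \<longleftrightarrow> (\<exists>c. \<forall>j. x j = p j + (\<Sum>i<k. c i * v i j))"
  by (simp add: affine_span_def)

lemma coset_self:
  assumes "x \<in> affine_span p k v"
  shows "affine_span x k v = affine_span p k v"
proof -
  obtain c where c: "\<And>j. x j = p j + (\<Sum>i<k. c i * v i j)" using assms by (auto simp: aspan_mem)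
  show ?thesis
  proof
    show "affine_span x k v \<subseteq> affine_span p k v"
    proof
      fix y assume "y \<in> affine_span x k v"
      then obtain d where d: "\<And>j. y j = x j + (\<Sum>i<k. d i * v i j)" by (auto simp: aspan_mem)
      have "\<forall>j. y j = p j + (\<Sum>i<k. (c i + d i) * v i j)"
        by (simp add: d c distrib_right sum.distrib add.assoc)
      then show "y \<in> affine_span p k v" by (auto simp: aspan_mem)
    qed
  next
    show "affine_span p k v \<subseteq> affine_span x k v"
    proof
      fix y assume "y \<in> affine_span p k v"
      then obtain d where d: "\<And>j. y j = p j + (\<Sum>i<k. d i * v i j)" by (auto simp: aspan_mem)
      have "\<forall>j. y j = x j + (\<Sum>i<k. (d i - c i) * v i j)"
        by (simp add: d c left_diff_distrib sum_subtractf)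
      then show "y \<in> affine_span x k v" by (auto simp: aspan_mem)
    qed
  qed
qed

lemma self_mem: "p \<in> affine_span p k (v :: nat \<Rightarrow> 'n \<Rightarrow> 'a::field)"
proof -
  have "\<forall>j. p j = p j + (\<Sum>i<k. (0::'a) * v i j)" by simp
  then show ?thesis unfolding aspan_mem by (intro exI[of _ "\<lambda>_. 0"]) simp
qed

lemma partition_sum:
  fixes y :: "('n::finite \<Rightarrow> 'a::{field,finite}) \<Rightarrow> real"
  shows "(\<Sum>S\<in>range (\<lambda>p. affine_span p k v). \<Sum>x\<in>S. y x) = (\<Sum>x\<in>UNIV. y x)"
proof -
  let ?C = "range (\<lambda>p. affine_span p k v)"
  have U: "\<Union>?C = UNIV" using self_mem by blast
  have dis: "\<forall>A\<in>?C. \<forall>B\<in>?C. A \<noteq> B \<longrightarrow> A \<inter> B = {}"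
  proof (intro ballI impI)
    fix A B assume "A \<in> ?C" "B \<in> ?C" "A \<noteq> B"
    then obtain p p' where A: "A = affine_span p k v" and B: "B = affine_span p' k v" by auto
    show "A \<inter> B = {}"
    proof (rule ccontr)
      assume "A \<inter> B \<noteq> {}"
      then obtain x where "x \<in> A" "x \<in> B" by auto
      then have "A = B" unfolding A B using coset_self by metis
      then show False using \<open>A \<noteq> B\<close> by simp
    qed
  qed
  have "sum y (\<Union>?C) = (sum \<circ> sum) y ?C"
    using sum.Union_disjoint[OF _ dis] by auto
  then show ?thesis using U by simp
qed

lemma span_card:
  "card (affine_span (h :: 'n::finite \<Rightarrow> 'a::{field,finite}) m u) \<le> CARD('a) ^ m"
proof -
  let ?f = "\<lambda>c j. h j + (\<Sum>i<m. c i * u i j)"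
  have eq: "affine_span h m u = ?f ` (PiE {..<m} (\<lambda>_. UNIV))"
  proof
    show "affine_span h m u \<subseteq> ?f ` (PiE {..<m} (\<lambda>_. UNIV))"
    proof
      fix x assume "x \<in> affine_span h m u"
      then obtain c where c: "\<And>j. x j = h j + (\<Sum>i<m. c i * u i j)" unfolding aspan_mem by blast
      have "\<And>j. (\<Sum>i<m. c i * u i j) = (\<Sum>i<m. restrict c {..<m} i * u i j)"
        by (rule sum.cong) auto
      then have "x = ?f (restrict c {..<m})"
        by (intro ext) (simp only: c)
      moreover have "restrict c {..<m} \<in> PiE {..<m} (\<lambda>_. UNIV)" by simp
      ultimately show "x \<in> ?f ` (PiE {..<m} (\<lambda>_. UNIV))"
        by (rule image_eqI)
    qed
  next
    show "?f ` (PiE {..<m} (\<lambda>_. UNIV)) \<subseteq> affine_span h m u"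
    proof
      fix x assume "x \<in> ?f ` (PiE {..<m} (\<lambda>_. UNIV))"
      then obtain c where "x = ?f c" by blast
      then show "x \<in> affine_span h m u" unfolding aspan_mem by (intro exI[of _ c]) simp
    qed
  qed
  have "card (affine_span h m u) \<le> card (PiE {..<m} (\<lambda>_. (UNIV :: 'a set)))"
    unfolding eq by (rule card_image_le) (rule finite_PiE, auto)
  also have "\<dots> = CARD('a) ^ m" by (simp add: card_PiE)
  finally show ?thesis .
qed

lemma card_field_ge2: "CARD('a::{field,finite}) \<ge> 2"
proof -
  have "card {0::'a, 1} = 2" by simp
  moreover have "card {0::'a, 1} \<le> CARD('a)" by (rule card_mono) auto
  ultimately show ?thesis by simp
qed

lemma exists_outside:
  assumes "m < CARD('n::finite)"
  shows "\<exists>z. z \<notin> affine_span (h :: 'n \<Rightarrow> 'a::{field,finite}) m u"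
proof (rule ccontr)
  assume "\<not> ?thesis"
  then have "affine_span h m u = UNIV" by auto
  then have "CARD('n \<Rightarrow> 'a) \<le> CARD('a) ^ m" using span_card[of h m u] by simp
  moreover have "CARD('n \<Rightarrow> 'a) = CARD('a) ^ CARD('n)" by (simp add: card_fun)
  moreover have "CARD('a) ^ m < CARD('a) ^ CARD('n)"
    using card_field_ge2[where 'a='a] assms by (intro power_strict_increasing) auto
  ultimately show False by simp
qed

lemma delta_sum:
  assumes "(i::nat) < k"
  shows "(\<Sum>i'<k. (if i' = i then 1 else 0) * (f i' :: 'a::field)) = f i"
proof -
  have "(\<Sum>i'<k. (if i' = i then 1 else 0) * f i') = (\<Sum>i'<k. if i' = i then f i' else 0)"
    by (rule sum.cong) auto
  also have "\<dots> = f i" using assms by (simp add: sum.delta)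
  finally show ?thesis .
qed

lemma incidence_sum:
  "(\<Sum>p\<in>UNIV. incidence p K * (y p :: real)) = (\<Sum>p\<in>K. y p)" for K :: "('n::finite \<Rightarrow> 'a::finite) set"
proof -
  have "(\<Sum>p\<in>UNIV. incidence p K * y p) = (\<Sum>p\<in>UNIV. if p \<in> K then y p else 0)"
    by (rule sum.cong) (auto simp: incidence_def)
  also have "\<dots> = (\<Sum>p\<in>UNIV \<inter> K. y p)" by (rule sum.inter_restrict[symmetric]) simp
  finally show ?thesis by simp
qed

theorem lemma6p2:
  fixes L :: "('n::finite \<Rightarrow> 'a::{field,finite}) set set"
    and H :: "('n \<Rightarrow> 'a) set"
    and k :: nat
  assumes "1 \<le> k" and "k \<le> CARD('n) - 1"
    and "L \<noteq> {}"
    and "\<forall>K\<in>L. affine_subspace k K"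
    and "affine_hyperplane H"
    and "\<forall>K\<in>L. K \<subseteq> H"
  shows "\<not> cameron_liebler k L"
proof
  assume CL: "cameron_liebler k L"
  define m where "m = CARD('n) - 1"
  have mlt: "m < CARD('n)" unfolding m_def using assms(1,2) by simp
  obtain h u where Hdef: "H = affine_span h m u"
    using assms(5) unfolding affine_hyperplane_def affine_subspace_def m_def by blast
  obtain z where z: "z \<notin> H" using exists_outside[OF mlt] Hdef by blast
  define e where "e = (\<lambda>j. z j - h j)"
  have diffD: "\<exists>b. \<forall>j. x' j - x j = (\<Sum>l<m. b l * u l j)" if "x \<in> H" "x' \<in> H" for x x'
  proof -
    have "x \<in> affine_span h m u" using that(1) Hdef by simp
    then obtain a where a: "\<And>j. x j = h j + (\<Sum>l<m. a l * u l j)" unfolding aspan_mem by blast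
    have "x' \<in> affine_span h m u" using that(2) Hdef by simp
    then obtain b where b: "\<And>j. x' j = h j + (\<Sum>l<m. b l * u l j)" unfolding aspan_mem by blast
    have "\<forall>j. x' j - x j = (\<Sum>l<m. (b l - a l) * u l j)"
      by (simp add: a b left_diff_distrib sum_subtractf)
    then show ?thesis by (intro exI[of _ "\<lambda>l. b l - a l"])
  qed
  have enot: "\<not> (\<exists>b. \<forall>j. e j = (\<Sum>l<m. b l * u l j))"
  proof
    assume "\<exists>b. \<forall>j. e j = (\<Sum>l<m. b l * u l j)"
    then obtain b where "\<And>j. e j = (\<Sum>l<m. b l * u l j)" by blast
    then have "\<forall>j. z j = h j + (\<Sum>l<m. b l * u l j)" by (metis e_def add_diff_cancel_left' diff_add_cancel add.commute)
    then have "z \<in> H" unfolding Hdef aspan_mem by (intro exI[of _ b])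
    then show False using z by simp
  qed
  from CL have "(\<lambda>K. if K \<in> L then 1 else 0) \<in> row_space k" by (simp add: cameron_liebler_def)
  then obtain y where y0: "\<forall>K. affine_subspace k K \<longrightarrow> (\<lambda>K. if K \<in> L then 1 else 0 :: real) K
      = (\<Sum>p\<in>UNIV. incidence p K * y p)"
    unfolding row_space_def by blast
  have hy: "\<And>K. affine_subspace k K \<Longrightarrow> (if K \<in> L then 1 else 0) = (\<Sum>p\<in>K. y p)"
    using y0 by (simp add: incidence_sum)
  obtain K0 where K0: "K0 \<in> L" using assms(3) by blast
  then obtain p0 v where v: "lin_indep k v" and K0def: "K0 = affine_span p0 k v"
    using assms(4) unfolding affine_subspace_def by blast
  have s1: "(\<Sum>S\<in>range (\<lambda>p. affine_span p k v). (if S \<in> L then 1 else 0 :: real)) = (\<Sum>x\<in>UNIV. y x)"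
  proof -
    have "(\<Sum>S\<in>range (\<lambda>p. affine_span p k v). (if S \<in> L then 1 else 0 :: real))
        = (\<Sum>S\<in>range (\<lambda>p. affine_span p k v). \<Sum>x\<in>S. y x)"
    proof (rule sum.cong[OF refl])
      fix S assume "S \<in> range (\<lambda>p. affine_span p k v)"
      then obtain p where Sp: "S = affine_span p k v" by blast
      have "affine_subspace k S" unfolding Sp affine_subspace_def using v by blast
      from hy[OF this] show "(if S \<in> L then 1 else 0 :: real) = (\<Sum>x\<in>S. y x)" .
    qed
    then show ?thesis using partition_sum by simp
  qed
  moreover have s2: "(\<Sum>S\<in>range (\<lambda>p. affine_span p k v). (if S \<in> L then 1 else 0 :: real)) \<ge> 1"
  proof -
    have "(if K0 \<in> L then 1 else 0 :: real) \<le> (\<Sum>S\<in>range (\<lambda>p. affine_span p k v). (if S \<in> L then 1 else 0 :: real))"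
      by (rule member_le_sum) (auto simp: K0def)
    then show ?thesis using K0 by simp
  qed
  define v' where "v' = (\<lambda>i. if i = 0 then e else v i)"
  obtain k' where kk: "k = Suc k'" using assms(1) by (cases k) auto
  have vD: "\<exists>b. \<forall>j. v i j = (\<Sum>l<m. b l * u l j)" if "i < k" for i
  proof -
    have "p0 \<in> K0" unfolding K0def by (rule self_mem)
    moreover have "(\<lambda>j. p0 j + v i j) \<in> K0"
    proof -
      have "\<forall>j. p0 j + v i j = p0 j + (\<Sum>i'<k. (if i' = i then 1 else 0) * v i' j)"
        using delta_sum[OF that, of "\<lambda>i'. v i' _"] by simp
      then show ?thesis unfolding K0def aspan_mem by (intro exI[of _ "\<lambda>i'. if i' = i then 1 else 0"])
    qed
    ultimately have "p0 \<in> H" "(\<lambda>j. p0 j + v i j) \<in> H" using K0 assms(6) by auto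
    from diffD[OF this] show ?thesis by simp
  qed
  then have "\<forall>i. \<exists>b. i < k \<longrightarrow> (\<forall>j. v i j = (\<Sum>l<m. b l * u l j))" by blast
  then have "\<exists>B. \<forall>i. i < k \<longrightarrow> (\<forall>j. v i j = (\<Sum>l<m. B i l * u l j))" by (rule choice)
  then obtain B where B: "\<And>i j. i < k \<Longrightarrow> v i j = (\<Sum>l<m. B i l * u l j)" by blast
  have v': "lin_indep k v'"
    unfolding lin_indep_def
  proof (intro allI impI)
    fix c i assume hc: "\<forall>j. (\<Sum>i<k. c i * v' i j) = 0" and ik: "i < k"
    show "c i = 0"
    proof (cases "c 0 = 0")
      case True
      have "\<forall>j. (\<Sum>i<k. c i * v i j) = 0"
      proof
        fix j
        have "(\<Sum>i<k. c i * v i j) = (\<Sum>i<k. c i * v' i j)"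
          by (rule sum.cong) (auto simp: v'_def True)
        then show "(\<Sum>i<k. c i * v i j) = 0" using hc by simp
      qed
      then show ?thesis using v ik unfolding lin_indep_def by blast
    next
      case False
      have "\<forall>j. e j = (\<Sum>l<m. (- (\<Sum>i<k'. c (Suc i) * B (Suc i) l) / c 0) * u l j)"
      proof
        fix j
        have h1: "c 0 * e j + (\<Sum>i<k'. c (Suc i) * v (Suc i) j) = 0"
          using hc[rule_format, of j] unfolding kk sum.lessThan_Suc_shift by (simp add: v'_def)
        have h2: "(\<Sum>i<k'. c (Suc i) * v (Suc i) j) = (\<Sum>i<k'. \<Sum>l<m. c (Suc i) * B (Suc i) l * u l j)"
          by (rule sum.cong) (auto simp: B kk sum_distrib_left mult.assoc)
        have "(\<Sum>l<m. (- (\<Sum>i<k'. c (Suc i) * B (Suc i) l) / c 0) * u l j)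
            = - (\<Sum>l<m. \<Sum>i<k'. c (Suc i) * B (Suc i) l * u l j) / c 0"
          by (simp add: sum_distrib_right sum_divide_distrib sum_negf)
        also have "\<dots> = - (\<Sum>i<k'. c (Suc i) * v (Suc i) j) / c 0"
          using h2 by (simp only: sum.swap[of _ "{..<m}"])
        also have "\<dots> = e j" using h1 False
          by (simp add: add_eq_0_iff)
        finally show "e j = (\<Sum>l<m. (- (\<Sum>i<k'. c (Suc i) * B (Suc i) l) / c 0) * u l j)" by simp
      qed
      then have "\<exists>b. \<forall>j. e j = (\<Sum>l<m. b l * u l j)"
        by (intro exI[of _ "\<lambda>l. - (\<Sum>i<k'. c (Suc i) * B (Suc i) l) / c 0"])
      with enot show ?thesis by blast
    qed
  qed
  have notL: "affine_span p k v' \<notin> L" for p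
  proof
    assume "affine_span p k v' \<in> L"
    then have sub: "affine_span p k v' \<subseteq> H" using assms(6) by blast
    have "p \<in> affine_span p k v'" by (rule self_mem)
    moreover have "(\<lambda>j. p j + e j) \<in> affine_span p k v'"
    proof -
      have "\<forall>j. p j + e j = p j + (\<Sum>i'<k. (if i' = 0 then 1 else 0) * v' i' j)"
        using delta_sum[of 0 k "\<lambda>i'. v' i' _"] assms(1) by (simp add: v'_def)
      then show ?thesis unfolding aspan_mem by (intro exI[of _ "\<lambda>i'. if i' = 0 then 1 else 0"])
    qed
    ultimately have "p \<in> H" "(\<lambda>j. p j + e j) \<in> H" using sub by auto
    from diffD[OF this] enot show False by simp
  qed
  have "(\<Sum>S\<in>range (\<lambda>p. affine_span p k v'). (if S \<in> L then 1 else 0 :: real)) = (\<Sum>x\<in>UNIV. y x)"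
  proof -
    have "(\<Sum>S\<in>range (\<lambda>p. affine_span p k v'). (if S \<in> L then 1 else 0 :: real))
        = (\<Sum>S\<in>range (\<lambda>p. affine_span p k v'). \<Sum>x\<in>S. y x)"
    proof (rule sum.cong[OF refl])
      fix S assume "S \<in> range (\<lambda>p. affine_span p k v')"
      then obtain p where Sp: "S = affine_span p k v'" by blast
      have "affine_subspace k S" unfolding Sp affine_subspace_def using v' by blast
      from hy[OF this] show "(if S \<in> L then 1 else 0 :: real) = (\<Sum>x\<in>S. y x)" .
    qed
    then show ?thesis using partition_sum by simp
  qed
  moreover have "(\<Sum>S\<in>range (\<lambda>p. affine_span p k v'). (if S \<in> L then 1 else 0 :: real)) = 0"
    using notL by (auto intro!: sum.neutral)
  ultimately show False using s1 s2 by simp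
qed

end
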